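(* Let $S$ be an inverse semigroup and $\alpha=(A_s,\alpha_s)_{s\in S}$ a partial action of $S$ on a ring $A$. Define $\gamma_\alpha:S\to\mathcal{I}(A)$ by letting $\gamma_\alpha(s)$ be the bijection $A_{s^{-1}}\to A_s$ (between subsets of the underlying set of $A$) given by $\gamma_\alpha(s)(a)=\alpha_s(a)$. Then $\gamma_\alpha$ is an inverse semigroup premorphism.
   Context: $S$ is an inverse semigroup with set of idempotents $E(S)$ and natural partial order $s\preceq t$ iff $s=te$ for some $e\in E(S)$. A partial action of $S$ on a ring $A$ is a family of ideals $A_{ss^{-1}}$ of $A$, ideals $A_s$ of $A_{ss^{-1}}$, and ring isomorphisms $\alpha_s:A_{s^{-1}}\to A_s$ ($s\in S$) such that (P1') $A=\sum_{e\in E(S)}A_e$; (P2') $\alpha_s(A_{s^{-1}}\cap A_t)=A_s\cap A_{st}$ for all $s,t$; (P3') $\alpha_s(\alpha_t(a))=\alpha_{st}(a)$ for all $a\in A_{t^{-1}}\cap A_{(st)^{-1}}$. $\mathcal{I}(A)$ is the symmetric inverse semigroup of all bijections between subsets of the underlying set of $A$, under composition of partial maps. A map $\psi:S\to T$ between inverse semigroups is a premorphism if for all $s,t\in S$: (i) $\psi(s)\psi(t)\preceq\psi(st)$; (ii) $\psi(s)^{-1}=\psi(s^{-1})$; (iii) $s\preceq t$ implies $\psi(s)\preceq\psi(t)$. *)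

theory Defs
  imports Main
begin

definition semigroup_on :: "'s set \<Rightarrow> ('s \<Rightarrow> 's \<Rightarrow> 's) \<Rightarrow> bool" where
  "semigroup_on S m \<longleftrightarrow> (\<forall>x\<in>S. \<forall>y\<in>S. m x y \<in> S) \<and>
     (\<forall>x\<in>S. \<forall>y\<in>S. \<forall>z\<in>S. m (m x y) z = m x (m y z))"

definition inverse_semigroup :: "'s set \<Rightarrow> ('s \<Rightarrow> 's \<Rightarrow> 's) \<Rightarrow> bool" where
  "inverse_semigroup S m \<longleftrightarrow> semigroup_on S m \<and>
     (\<forall>s\<in>S. \<exists>!t. t \<in> S \<and> m (m s t) s = s \<and> m (m t s) t = t)"

definition sinv :: "'s set \<Rightarrow> ('s \<Rightarrow> 's \<Rightarrow> 's) \<Rightarrow> 's \<Rightarrow> 's" where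
  "sinv S m s = (THE t. t \<in> S \<and> m (m s t) s = s \<and> m (m t s) t = t)"

definition idems :: "'s set \<Rightarrow> ('s \<Rightarrow> 's \<Rightarrow> 's) \<Rightarrow> 's set" where
  "idems S m = {e \<in> S. m e e = e}"

definition nat_le :: "'s set \<Rightarrow> ('s \<Rightarrow> 's \<Rightarrow> 's) \<Rightarrow> 's \<Rightarrow> 's \<Rightarrow> bool" where
  "nat_le S m s t \<longleftrightarrow> (\<exists>e\<in>idems S m. s = m t e)"

definition premorphism ::
  "'s set \<Rightarrow> ('s \<Rightarrow> 's \<Rightarrow> 's) \<Rightarrow> 't set \<Rightarrow> ('t \<Rightarrow> 't \<Rightarrow> 't) \<Rightarrow> ('s \<Rightarrow> 't) \<Rightarrow> bool" where
  "premorphism S m T n \<psi> \<longleftrightarrow>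
     (\<forall>s\<in>S. \<psi> s \<in> T) \<and>
     (\<forall>s\<in>S. \<forall>t\<in>S. nat_le T n (n (\<psi> s) (\<psi> t)) (\<psi> (m s t))) \<and>
     (\<forall>s\<in>S. sinv T n (\<psi> s) = \<psi> (sinv S m s)) \<and>
     (\<forall>s\<in>S. \<forall>t\<in>S. nat_le S m s t \<longrightarrow> nat_le T n (\<psi> s) (\<psi> t))"

text \<open>Partial bijections between subsets, represented as injective partial maps;
  product = composition of partial maps (f g means: first g, then f).\<close>
definition sym_inv_carrier :: "('a \<Rightarrow> 'a option) set" where
  "sym_inv_carrier = {f. inj_on f (dom f)}"

definition sym_inv_mult :: "('a \<Rightarrow> 'a option) \<Rightarrow> ('a \<Rightarrow> 'a option) \<Rightarrow> ('a \<Rightarrow> 'a option)" where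
  "sym_inv_mult f g = f \<circ>\<^sub>m g"

definition ideal_in :: "'a::ring set \<Rightarrow> 'a set \<Rightarrow> bool" where
  "ideal_in I R \<longleftrightarrow> I \<subseteq> R \<and> 0 \<in> I \<and>
     (\<forall>x\<in>I. \<forall>y\<in>I. x + y \<in> I) \<and> (\<forall>x\<in>I. - x \<in> I) \<and>
     (\<forall>r\<in>R. \<forall>x\<in>I. r * x \<in> I \<and> x * r \<in> I)"

definition ring_iso_betw :: "('a::ring \<Rightarrow> 'a) \<Rightarrow> 'a set \<Rightarrow> 'a set \<Rightarrow> bool" where
  "ring_iso_betw f X Y \<longleftrightarrow> bij_betw f X Y \<and>
     (\<forall>x\<in>X. \<forall>y\<in>X. f (x + y) = f x + f y \<and> f (x * y) = f x * f y)"

text \<open>Partial action (A_s, alpha_s) of the inverse semigroup (S, m) on the ring 'a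
  (the whole type), axioms (P1')--(P3').\<close>
definition partial_action ::
  "'s set \<Rightarrow> ('s \<Rightarrow> 's \<Rightarrow> 's) \<Rightarrow> ('s \<Rightarrow> 'a::ring set) \<Rightarrow> ('s \<Rightarrow> 'a \<Rightarrow> 'a) \<Rightarrow> bool" where
  "partial_action S m D \<alpha> \<longleftrightarrow>
     (\<forall>s\<in>S. ideal_in (D (m s (sinv S m s))) UNIV) \<and>
     (\<forall>s\<in>S. ideal_in (D s) (D (m s (sinv S m s)))) \<and>
     (\<forall>s\<in>S. ring_iso_betw (\<alpha> s) (D (sinv S m s)) (D s)) \<and>
     (\<forall>a. \<exists>F x. finite F \<and> F \<subseteq> idems S m \<and> (\<forall>e\<in>F. x e \<in> D e) \<and> a = sum x F) \<and>
     (\<forall>s\<in>S. \<forall>t\<in>S. \<alpha> s ` (D (sinv S m s) \<inter> D t) = D s \<inter> D (m s t)) \<and>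
     (\<forall>s\<in>S. \<forall>t\<in>S. \<forall>a \<in> D (sinv S m t) \<inter> D (sinv S m (m s t)).
        \<alpha> s (\<alpha> t a) = \<alpha> (m s t) a)"

definition gamma_act ::
  "'s set \<Rightarrow> ('s \<Rightarrow> 's \<Rightarrow> 's) \<Rightarrow> ('s \<Rightarrow> 'a set) \<Rightarrow> ('s \<Rightarrow> 'a \<Rightarrow> 'a) \<Rightarrow> 's \<Rightarrow> 'a \<Rightarrow> 'a option" where
  "gamma_act S m D \<alpha> s = (\<lambda>a. if a \<in> D (sinv S m s) then Some (\<alpha> s a) else None)"

end

theory Submission
  imports Defs
begin

locale isg =
  fixes S :: "'s set" and m :: "'s \<Rightarrow> 's \<Rightarrow> 's"
  assumes isg: "inverse_semigroup S m"
begin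

abbreviation i where "i s \<equiv> sinv S m s"
definition idem where "idem e \<longleftrightarrow> e \<in> S \<and> m e e = e"

lemma cl[simp]: "x \<in> S \<Longrightarrow> y \<in> S \<Longrightarrow> m x y \<in> S"
  using isg unfolding inverse_semigroup_def semigroup_on_def by blast

lemma assoc[simp]: "x \<in> S \<Longrightarrow> y \<in> S \<Longrightarrow> z \<in> S \<Longrightarrow> m (m x y) z = m x (m y z)"
  using isg unfolding inverse_semigroup_def semigroup_on_def by blast

lemma inv_ex: assumes "s \<in> S" shows "i s \<in> S" "m s (m (i s) s) = s" "m (i s) (m s (i s)) = i s"
proof -
  have "\<exists>!t. t \<in> S \<and> m (m s t) s = s \<and> m (m t s) t = t"
    using isg assms unfolding inverse_semigroup_def by blast
  then have "i s \<in> S \<and> m (m s (i s)) s = s \<and> m (m (i s) s) (i s) = i s"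
    unfolding sinv_def by (rule theI')
  then show "i s \<in> S" "m s (m (i s) s) = s" "m (i s) (m s (i s)) = i s" using assms by auto
qed

lemma inv_in[simp]: "s \<in> S \<Longrightarrow> i s \<in> S" using inv_ex by blast

lemma inv_uniq: assumes "s \<in> S" "t \<in> S" "m s (m t s) = s" "m t (m s t) = t"
  shows "i s = t"
proof -
  have "\<exists>!t. t \<in> S \<and> m (m s t) s = s \<and> m (m t s) t = t"
    using isg assms unfolding inverse_semigroup_def by blast
  moreover have "t \<in> S \<and> m (m s t) s = s \<and> m (m t s) t = t" using assms by simp
  ultimately show ?thesis unfolding sinv_def by (rule the1_equality)
qed

lemma inv_inv[simp]: "s \<in> S \<Longrightarrow> i (i s) = s"
  by (rule inv_uniq) (auto simp: inv_ex)

lemma idem_left: "idem f \<Longrightarrow> z \<in> S \<Longrightarrow> m f (m f z) = m f z"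
  unfolding idem_def by (metis assoc)

lemma inv_idem: "idem e \<Longrightarrow> i e = e"
  by (rule inv_uniq) (auto simp: idem_def)

lemma prod_idem: assumes "idem e" "idem f" shows "idem (m e f)"
proof -
  have e: "e \<in> S" and f: "f \<in> S" using assms idem_def by auto
  define a where "a = m e f"
  have a: "a \<in> S" using a_def e f by simp
  define x where "x = i a"
  have x: "x \<in> S" using x_def a by simp
  define y where "y = m f (m x e)"
  have y: "y \<in> S" using y_def x e f by simp
  have axa: "m a (m x a) = a" "m x (m a x) = x" using inv_ex[OF a] x_def by auto
  have "m a (m y a) = m a (m x a)"
    unfolding a_def y_def using e f x assms by (simp add: idem_left idem_def)
  also have "\<dots> = a" by (rule axa)
  finally have 1: "m a (m y a) = a" .
  have "m y (m a y) = m f (m x (m a (m x e)))"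
    unfolding a_def y_def using e f x assms by (simp add: idem_left idem_def)
  also have "\<dots> = y"
  proof -
    have "m x (m a (m x e)) = m (m x (m a x)) e" using x a e by simp
    then show ?thesis using axa(2) unfolding y_def by simp
  qed
  finally have 2: "m y (m a y) = y" .
  have yx: "x = y" using inv_uniq[OF a y 1 2] x_def by simp
  have "m y y = y"
  proof -
    have "m y y = m f (m (m x (m a x)) e)" unfolding y_def a_def using e f x assms
      by (simp add: idem_left idem_def)
    also have "\<dots> = y" using axa(2) unfolding y_def by simp
    finally show ?thesis .
  qed
  then have "idem x" using yx y by (simp add: idem_def)
  then have "i x = x" by (rule inv_idem)
  moreover have "i x = a" using x_def a by simp
  ultimately show ?thesis using \<open>idem x\<close> a_def by simp
qed

lemma idem_comm: assumes "idem e" "idem f" shows "m e f = m f e"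
proof -
  have e: "e \<in> S" and f: "f \<in> S" using assms idem_def by auto
  have ef: "idem (m e f)" and fe: "idem (m f e)" using prod_idem assms by auto
  have "i (m e f) = m f e"
  proof (rule inv_uniq)
    show "m (m e f) (m (m f e) (m e f)) = m e f"
      using ef fe e f assms by (simp add: idem_left idem_def)
    show "m (m f e) (m (m e f) (m f e)) = m f e"
      using ef fe e f assms by (simp add: idem_left idem_def)
  qed (use e f in auto)
  then show ?thesis using inv_idem[OF ef] by simp
qed

lemma comm3: "idem e \<Longrightarrow> idem f \<Longrightarrow> z \<in> S \<Longrightarrow> m e (m f z) = m f (m e z)"
proof -
  assume a: "idem e" "idem f" "z \<in> S"
  then have "m (m e f) z = m (m f e) z" using idem_comm by simp
  then show ?thesis using a by (simp add: idem_def)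
qed

lemma idem_rinv: "s \<in> S \<Longrightarrow> idem (m s (i s))"
  unfolding idem_def using inv_ex[of s] by simp

lemma idem_linv: "s \<in> S \<Longrightarrow> idem (m (i s) s)"
  unfolding idem_def using inv_ex[of s] by simp

lemma canc1[simp]: "s \<in> S \<Longrightarrow> z \<in> S \<Longrightarrow> m s (m (i s) (m s z)) = m s z"
proof -
  assume a: "s \<in> S" "z \<in> S"
  have "m s (m (i s) (m s z)) = m (m s (m (i s) s)) z" using a by simp
  then show ?thesis using inv_ex[of s] a by simp
qed

lemma canc2[simp]: "s \<in> S \<Longrightarrow> z \<in> S \<Longrightarrow> m (i s) (m s (m (i s) z)) = m (i s) z"
proof -
  assume a: "s \<in> S" "z \<in> S"
  have "m (i s) (m s (m (i s) z)) = m (m (i s) (m s (i s))) z" using a by simp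
  then show ?thesis using inv_ex[of s] a by simp
qed

lemma comm_inv: assumes "s \<in> S" "t \<in> S" "z \<in> S"
  shows "m t (m (i t) (m (i s) (m s z))) = m (i s) (m s (m t (m (i t) z)))"
  using comm3[OF idem_rinv[OF assms(2)] idem_linv[OF assms(1)] assms(3)] assms by simp

lemma inv_prod: assumes s: "s \<in> S" and t: "t \<in> S" shows "i (m s t) = m (i t) (i s)"
proof (rule inv_uniq)
  show "m (m s t) (m (m (i t) (i s)) (m s t)) = m s t"
    using s t comm_inv[OF s t t] inv_ex[OF s] inv_ex[OF t] by simp
  show "m (m (i t) (i s)) (m (m s t) (m (i t) (i s))) = m (i t) (i s)"
  proof -
    have "m (m (i t) (i s)) (m (m s t) (m (i t) (i s))) = m (i t) (m (i s) (m s (m t (m (i t) (i s)))))"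
      using s t by simp
    also have "\<dots> = m (i t) (m t (m (i t) (m (i s) (m s (i s)))))"
      using comm_inv[OF s t inv_in[OF s]] by simp
    also have "\<dots> = m (i t) (i s)" using s t inv_ex[OF s] by simp
    finally show ?thesis .
  qed
qed (use s t in auto)

lemma le_facts: assumes t: "t \<in> S" and e: "idem e" and s: "s = m t e"
  shows "i s = m e (i t)" "m (m s (i s)) t = s" "m (i t) (m s (i s)) = i s"
    "m (i s) s = m e (m (i t) (m t e))"
proof -
  have eS: "e \<in> S" using e idem_def by auto
  show 1: "i s = m e (i t)" using inv_prod[OF t eS] inv_idem[OF e] s by simp
  have tt: "idem (m (i t) t)" using idem_linv[OF t] .
  have "m (m s (i s)) t = m t (m e (m e (m (i t) t)))" using 1 s t eS by simp
  also have "\<dots> = m t (m e (m (i t) t))" using idem_left[OF e] t eS by simp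
  also have "\<dots> = m t (m (i t) (m t e))" using idem_comm[OF e tt] t eS e by (simp add: idem_def)
  also have "\<dots> = s" using s t eS by simp
  finally show "m (m s (i s)) t = s" .
  have "m (i t) (m s (i s)) = m (i t) (m t (m e (m e (i t))))" using 1 s t eS by simp
  also have "\<dots> = m (i t) (m t (m e (i t)))" using idem_left[OF e] t eS by simp
  also have "\<dots> = m e (m (i t) (m t (i t)))" using comm3[OF tt e, of "i t"] t eS e by (simp add: idem_def)
  also have "\<dots> = i s" using 1 inv_ex[OF t] by simp
  finally show "m (i t) (m s (i s)) = i s" .
  show "m (i s) s = m e (m (i t) (m t e))" using 1 s t eS by simp
qed

end

lemma prem_char:
  assumes "\<forall>x y. g y = Some x \<longleftrightarrow> f x = Some y"
  shows "(f \<circ>\<^sub>m g) \<circ>\<^sub>m f = f" "(g \<circ>\<^sub>m f) \<circ>\<^sub>m g = g"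
proof -
  show "(f \<circ>\<^sub>m g) \<circ>\<^sub>m f = f"
  proof
    fix x show "((f \<circ>\<^sub>m g) \<circ>\<^sub>m f) x = f x"
    proof (cases "f x")
      case (Some a)
      then have "g a = Some x" using assms by blast
      then show ?thesis using Some by (simp add: map_comp_def)
    qed (simp add: map_comp_def)
  qed
  show "(g \<circ>\<^sub>m f) \<circ>\<^sub>m g = g"
  proof
    fix x show "((g \<circ>\<^sub>m f) \<circ>\<^sub>m g) x = g x"
    proof (cases "g x")
      case (Some a)
      then have "f a = Some x" using assms by blast
      then show ?thesis using Some by (simp add: map_comp_def)
    qed (simp add: map_comp_def)
  qed
qed

lemma inv_char:
  assumes f: "inj_on f (dom f)" and g: "inj_on g (dom g)"
    and 1: "(f \<circ>\<^sub>m g) \<circ>\<^sub>m f = f" and 2: "(g \<circ>\<^sub>m f) \<circ>\<^sub>m g = g"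
  shows "g y = Some x \<longleftrightarrow> f x = Some y"
proof
  assume gy: "g y = Some x"
  have "((g \<circ>\<^sub>m f) \<circ>\<^sub>m g) y = Some x" using 2 gy by simp
  then obtain w where fx: "f x = Some w" and gw: "g w = Some x" using gy
    by (auto simp: map_comp_def split: option.splits)
  have "w = y" using g gw gy by (auto simp: inj_on_def dom_def)
  then show "f x = Some y" using fx by simp
next
  assume fx: "f x = Some y"
  have "((f \<circ>\<^sub>m g) \<circ>\<^sub>m f) x = Some y" using 1 fx by simp
  then obtain z where gy: "g y = Some z" and fz: "f z = Some y" using fx
    by (auto simp: map_comp_def split: option.splits)
  have "z = x" using f fz fx by (auto simp: inj_on_def dom_def)
  then show "g y = Some x" using gy by simp
qed

lemma inv_unique_I:
  assumes f: "inj_on f (dom f)" and g: "inj_on g (dom g)" and h: "inj_on h (dom h)"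
    and "(f \<circ>\<^sub>m g) \<circ>\<^sub>m f = f" "(g \<circ>\<^sub>m f) \<circ>\<^sub>m g = g"
    and "(f \<circ>\<^sub>m h) \<circ>\<^sub>m f = f" "(h \<circ>\<^sub>m f) \<circ>\<^sub>m h = h"
  shows "g = h"
proof
  fix y
  have G: "\<And>x. g y = Some x \<longleftrightarrow> f x = Some y" using inv_char[OF f g] assms by blast
  have H: "\<And>x. h y = Some x \<longleftrightarrow> f x = Some y" using inv_char[OF f h] assms by blast
  show "g y = h y"
  proof (cases "g y")
    case None
    then show ?thesis using G H by (cases "h y") auto
  next
    case (Some x)
    then show ?thesis using G H by metis
  qed
qed

definition idI :: "'a set \<Rightarrow> 'a \<Rightarrow> 'a option" where
  "idI X = (\<lambda>a. if a \<in> X then Some a else None)"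

lemma idI_idem: "idI X \<in> idems sym_inv_carrier sym_inv_mult"
  unfolding idems_def sym_inv_carrier_def sym_inv_mult_def idI_def
  by (auto simp: inj_on_def map_comp_def dom_def)

locale pa = isg S m for S :: "'s set" and m +
  fixes D :: "'s \<Rightarrow> 'r::ring set" and \<alpha> :: "'s \<Rightarrow> 'r \<Rightarrow> 'r"
  assumes pa: "partial_action S m D \<alpha>"
begin

lemma paU: "(\<forall>s\<in>S. ideal_in (D (m s (i s))) UNIV) \<and>
     (\<forall>s\<in>S. ideal_in (D s) (D (m s (i s)))) \<and>
     (\<forall>s\<in>S. ring_iso_betw (\<alpha> s) (D (i s)) (D s)) \<and>
     (\<forall>a. \<exists>F x. finite F \<and> F \<subseteq> idems S m \<and> (\<forall>e\<in>F. x e \<in> D e) \<and> a = sum x F) \<and>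
     (\<forall>s\<in>S. \<forall>t\<in>S. \<alpha> s ` (D (i s) \<inter> D t) = D s \<inter> D (m s t)) \<and>
     (\<forall>s\<in>S. \<forall>t\<in>S. \<forall>a \<in> D (i t) \<inter> D (i (m s t)).
        \<alpha> s (\<alpha> t a) = \<alpha> (m s t) a)"
  using pa unfolding partial_action_def .

lemma Dsub: assumes s: "s \<in> S" shows "D s \<subseteq> D (m s (i s))"
proof -
  have h: "\<forall>s\<in>S. ideal_in (D s) (D (m s (i s)))" using paU by (elim conjE)
  have "ideal_in (D s) (D (m s (i s)))" using h s by (rule bspec)
  then show ?thesis unfolding ideal_in_def by (rule conjunct1)
qed

lemma bij: assumes s: "s \<in> S" shows "bij_betw (\<alpha> s) (D (i s)) (D s)"
proof -
  have h: "\<forall>s\<in>S. ring_iso_betw (\<alpha> s) (D (i s)) (D s)" using paU by (elim conjE)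
  have "ring_iso_betw (\<alpha> s) (D (i s)) (D s)" using h s by (rule bspec)
  then show ?thesis unfolding ring_iso_betw_def by (rule conjunct1)
qed

lemma P2: assumes "s \<in> S" "t \<in> S" shows "\<alpha> s ` (D (i s) \<inter> D t) = D s \<inter> D (m s t)"
proof -
  have "\<forall>s\<in>S. \<forall>t\<in>S. \<alpha> s ` (D (i s) \<inter> D t) = D s \<inter> D (m s t)"
    using paU by (elim conjE)
  then show ?thesis using assms by (auto dest!: bspec)
qed

lemma P3: assumes "s \<in> S" "t \<in> S" "a \<in> D (i t)" "a \<in> D (i (m s t))"
  shows "\<alpha> s (\<alpha> t a) = \<alpha> (m s t) a"
proof -
  have "\<forall>s\<in>S. \<forall>t\<in>S. \<forall>a \<in> D (i t) \<inter> D (i (m s t)). \<alpha> s (\<alpha> t a) = \<alpha> (m s t) a"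
    using paU by (elim conjE)
  then show ?thesis using assms by (meson IntI)
qed

lemma alpha_idem: assumes e: "idem e" and a: "a \<in> D e" shows "\<alpha> e a = a"
proof -
  have eS: "e \<in> S" and ee: "m e e = e" using e idem_def by auto
  have ie: "i e = e" using inv_idem[OF e] .
  have "\<alpha> e (\<alpha> e a) = \<alpha> e a" using P3[OF eS eS, of a] a ie ee by simp
  moreover have "\<alpha> e a \<in> D e" using bij[OF eS] a ie by (auto simp: bij_betw_def)
  moreover have "inj_on (\<alpha> e) (D e)" using bij[OF eS] ie by (simp add: bij_betw_def)
  ultimately show ?thesis using a by (auto simp: inj_on_def)
qed

lemma D_idem: assumes e: "idem e" and t: "t \<in> S" shows "D e \<inter> D t = D e \<inter> D (m e t)"
proof -
  have eS: "e \<in> S" using e idem_def by auto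
  have "\<alpha> e ` (D e \<inter> D t) = D e \<inter> D t"
    using alpha_idem[OF e] by (auto simp: image_iff)
  then show ?thesis using P2[OF eS t] inv_idem[OF e] by simp
qed

lemma D_le: assumes s: "s \<in> S" and t: "t \<in> S" and e: "idem e" and st: "s = m t e"
  shows "D s \<subseteq> D t"
proof -
  have "D (m s (i s)) \<inter> D t = D (m s (i s)) \<inter> D s"
    using D_idem[OF idem_rinv[OF s] t] le_facts(2)[OF t e st] by simp
  then show ?thesis using Dsub[OF s] by blast
qed

lemma alpha_inv: assumes s: "s \<in> S" and a: "a \<in> D (i s)" shows "\<alpha> (i s) (\<alpha> s a) = a"
proof -
  have "D (i s) \<subseteq> D (m (i s) s)" using Dsub[of "i s"] s by simp
  then have a2: "a \<in> D (m (i s) s)" using a by blast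
  have "\<alpha> (i s) (\<alpha> s a) = \<alpha> (m (i s) s) a"
    using P3[of "i s" s a] s a a2 inv_idem[OF idem_linv[OF s]] by simp
  also have "\<dots> = a" using alpha_idem[OF idem_linv[OF s] a2] .
  finally show ?thesis .
qed

abbreviation G where "G \<equiv> gamma_act S m D \<alpha>"

lemma G_in: assumes s: "s \<in> S" shows "G s \<in> sym_inv_carrier"
proof -
  have d: "dom (G s) = D (i s)" by (auto simp: gamma_act_def dom_def)
  have "inj_on (\<alpha> s) (D (i s))" using bij[OF s] by (simp add: bij_betw_def)
  then have "inj_on (G s) (D (i s))" unfolding inj_on_def gamma_act_def by simp
  then show ?thesis unfolding sym_inv_carrier_def using d by simp
qed

lemma G_conv: assumes s: "s \<in> S" shows "\<forall>x y. G (i s) y = Some x \<longleftrightarrow> G s x = Some y"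
proof (intro allI iffI)
  fix x y
  assume h: "G (i s) y = Some x"
  then have y: "y \<in> D s" and x: "x = \<alpha> (i s) y" using s by (auto simp: gamma_act_def split: if_splits)
  have "x \<in> D (i s)" using bij[of "i s"] s y x by (auto simp: bij_betw_def)
  moreover have "\<alpha> s x = y" using alpha_inv[of "i s" y] s y x by simp
  ultimately show "G s x = Some y" by (simp add: gamma_act_def)
next
  fix x y
  assume h: "G s x = Some y"
  then have x: "x \<in> D (i s)" and y: "y = \<alpha> s x" by (auto simp: gamma_act_def split: if_splits)
  have "y \<in> D s" using bij[of s] s y x by (auto simp: bij_betw_def)
  then show "G (i s) y = Some x" using alpha_inv[OF s x] s y by (simp add: gamma_act_def)
qed

lemma G_sinv: assumes s: "s \<in> S"
  shows "sinv sym_inv_carrier sym_inv_mult (G s) = G (i s)"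
proof -
  have c: "G (i s) \<in> sym_inv_carrier" using G_in s by simp
  have ex: "G (i s) \<in> sym_inv_carrier \<and>
    sym_inv_mult (sym_inv_mult (G s) (G (i s))) (G s) = G s \<and>
    sym_inv_mult (sym_inv_mult (G (i s)) (G s)) (G (i s)) = G (i s)"
    using c prem_char[OF G_conv[OF s]] by (simp add: sym_inv_mult_def)
  have un: "g = G (i s)" if g: "g \<in> sym_inv_carrier \<and>
    sym_inv_mult (sym_inv_mult (G s) g) (G s) = G s \<and>
    sym_inv_mult (sym_inv_mult g (G s)) g = g" for g
  proof -
    have i1: "inj_on (G s) (dom (G s))" using G_in[OF s] by (simp add: sym_inv_carrier_def)
    have i2: "inj_on g (dom g)" using g by (simp add: sym_inv_carrier_def)
    have i3: "inj_on (G (i s)) (dom (G (i s)))" using c by (simp add: sym_inv_carrier_def)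
    have g1: "(G s \<circ>\<^sub>m g) \<circ>\<^sub>m G s = G s" "(g \<circ>\<^sub>m G s) \<circ>\<^sub>m g = g"
      using g by (simp_all add: sym_inv_mult_def)
    show "g = G (i s)"
      using inv_unique_I[OF i1 i2 i3 g1 prem_char[OF G_conv[OF s]]] .
  qed
  show ?thesis
    apply (subst sinv_def[of sym_inv_carrier])
    apply (rule the_equality)
     apply (rule ex)
    apply (erule un)
    done
qed

lemma G_mult: assumes s: "s \<in> S" and t: "t \<in> S"
  shows "nat_le sym_inv_carrier sym_inv_mult (sym_inv_mult (G s) (G t)) (G (m s t))"
proof -
  define E where "E = {a \<in> D (i t). \<alpha> t a \<in> D (i s)}"
  have "G s \<circ>\<^sub>m G t = G (m s t) \<circ>\<^sub>m idI E"
  proof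
    fix a
    show "(G s \<circ>\<^sub>m G t) a = (G (m s t) \<circ>\<^sub>m idI E) a"
    proof (cases "a \<in> E")
      case True
      then have a1: "a \<in> D (i t)" and a2: "\<alpha> t a \<in> D (i s)" by (auto simp: E_def)
      have "\<alpha> t a \<in> D t" using bij[OF t] a1 by (auto simp: bij_betw_def)
      then have "\<alpha> (i t) (\<alpha> t a) \<in> D (i t) \<inter> D (m (i t) (i s))"
        using P2[of "i t" "i s"] s t a2 by auto
      then have a3: "a \<in> D (i (m s t))" using alpha_inv[OF t a1] inv_prod[OF s t] by simp
      have "\<alpha> s (\<alpha> t a) = \<alpha> (m s t) a" using P3[OF s t a1 a3] .
      then show ?thesis using True a1 a2 a3 by (simp add: gamma_act_def idI_def map_comp_def)
    next
      case False
      then show ?thesis by (auto simp: E_def gamma_act_def idI_def map_comp_def)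
    qed
  qed
  then have eq: "sym_inv_mult (G s) (G t) = sym_inv_mult (G (m s t)) (idI E)"
    by (simp add: sym_inv_mult_def)
  show ?thesis unfolding nat_le_def using eq idI_idem[of E] by (rule bexI)
qed

lemma G_le: assumes s: "s \<in> S" and t: "t \<in> S" and le: "nat_le S m s t"
  shows "nat_le sym_inv_carrier sym_inv_mult (G s) (G t)"
proof -
  obtain e where e: "idem e" and st: "s = m t e"
    using le unfolding nat_le_def idems_def idem_def by auto
  have eS: "e \<in> S" using e idem_def by auto
  have sub1: "D (i s) \<subseteq> D (i t)"
    using D_le[of "i s" "i t" "m s (i s)"] le_facts(3)[OF t e st] s t idem_rinv[OF s] by simp
  have "D (i s) \<subseteq> D (m (i s) s)" using Dsub[of "i s"] s by simp
  also have "\<dots> \<subseteq> D e"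
    using D_le[of "m (i s) s" e "m (i t) (m t e)"] le_facts(4)[OF t e st] s t eS
      prod_idem[OF idem_linv[OF t] e] by simp
  finally have sub2: "D (i s) \<subseteq> D e" .
  have "G s = G t \<circ>\<^sub>m idI (D (i s))"
  proof
    fix a
    show "G s a = (G t \<circ>\<^sub>m idI (D (i s))) a"
    proof (cases "a \<in> D (i s)")
      case True
      have ae: "a \<in> D e" using True sub2 by blast
      have "\<alpha> t (\<alpha> e a) = \<alpha> s a"
        using P3[OF t eS, of a] True ae inv_idem[OF e] st by simp
      then have "\<alpha> t a = \<alpha> s a" using alpha_idem[OF e] True sub2 by auto
      then show ?thesis using True sub1 by (auto simp: gamma_act_def idI_def map_comp_def)
    next
      case False
      then show ?thesis by (auto simp: gamma_act_def idI_def map_comp_def)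
    qed
  qed
  then have eq: "G s = sym_inv_mult (G t) (idI (D (i s)))"
    by (simp add: sym_inv_mult_def)
  show ?thesis unfolding nat_le_def using eq idI_idem[of "D (i s)"] by (rule bexI)
qed

end

theorem mainTheorem7:
  fixes S :: "'s set" and m :: "'s \<Rightarrow> 's \<Rightarrow> 's"
    and D :: "'s \<Rightarrow> 'a::ring set" and \<alpha> :: "'s \<Rightarrow> 'a \<Rightarrow> 'a"
  assumes "inverse_semigroup S m"
    and "partial_action S m D \<alpha>"
  shows "premorphism S m sym_inv_carrier sym_inv_mult (gamma_act S m D \<alpha>)"
proof -
  interpret pa S m D \<alpha> using assms by (unfold_locales) auto
  show ?thesis unfolding premorphism_def
  proof (intro conjI ballI impI)
    fix s assume "s \<in> S" then show "gamma_act S m D \<alpha> s \<in> sym_inv_carrier" by (rule G_in)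
  next
    fix s t assume "s \<in> S" "t \<in> S"
    then show "nat_le sym_inv_carrier sym_inv_mult
      (sym_inv_mult (gamma_act S m D \<alpha> s) (gamma_act S m D \<alpha> t)) (gamma_act S m D \<alpha> (m s t))"
      by (rule G_mult)
  next
    fix s assume "s \<in> S"
    then show "sinv sym_inv_carrier sym_inv_mult (gamma_act S m D \<alpha> s) = gamma_act S m D \<alpha> (sinv S m s)"
      by (rule G_sinv)
  next
    fix s t assume "s \<in> S" "t \<in> S" "nat_le S m s t"
    then show "nat_le sym_inv_carrier sym_inv_mult (gamma_act S m D \<alpha> s) (gamma_act S m D \<alpha> t)"
      by (rule G_le)
  qed
qed

end
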